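(* Let $H$ be a nonlocal vertex bialgebra and let $V$ be a nonlocal vertex $H$-module-algebra. Then for all $h,h'\in H$ and $v\in V$, $$Y(h,z+x)Y(h',z)v=Y(Y(h,x)h',z)v,$$ where $Y(h,z+x)$ is expanded in nonnegative powers of $x$.
   Context: All vector spaces are over $\mathbb{C}$. A nonlocal vertex algebra is a vector space $V$ with a linear map $Y(\cdot,x):V\to \mathrm{Hom}(V,V((x)))$, $v\mapsto Y(v,x)=\sum_{n\in\mathbb Z}v_nx^{-n-1}$, and a vector $\mathbf 1\in V$ such that for all $v$: $Y(\mathbf 1,x)v=v$, $Y(v,x)\mathbf 1\in V[[x]]$, $\lim_{x\to0}Y(v,x)\mathbf 1=v$; and for all $u,v,w$ there is $k\ge0$ with $(x_0+x_2)^kY(u,x_0+x_2)Y(v,x_2)w=(x_0+x_2)^kY(Y(u,x_0)v,x_2)w$. A module over a nonlocal vertex algebra $H$ is a vector space $W$ with a linear map $Y_W(\cdot,x):H\to\mathrm{Hom}(W,W((x)))$ such that $Y_W(\mathbf 1,x)=1_W$ and for $a,b\in H$, $w\in W$ there is $l\ge0$ with $(x_0+x_2)^lY_W(a,x_0+x_2)Y_W(b,x_2)w=(x_0+x_2)^lY_W(Y(a,x_0)b,x_2)w$. Binomial expressions $f(x_1\pm x_2)$ are expanded in nonnegative powers of the second variable. A nonlocal vertex bialgebra is a nonlocal vertex algebra $H$ with a coalgebra structure $(\Delta,\varepsilon)$ such that $\Delta:H\to H\otimes H$ and $\varepsilon:H\to\mathbb C$ are homomorphisms of nonlocal vertex algebras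 ($H\otimes H$ with the tensor product structure $Y(a\otimes b,x)(a'\otimes b')=Y(a,x)a'\otimes Y(b,x)b'$, $\mathbb C$ with $Y(1,x)=1$): $\varepsilon(\mathbf 1)=1$, $\varepsilon(Y(h,x)h')=\varepsilon(h)\varepsilon(h')$, $\Delta(\mathbf 1)=\mathbf 1\otimes\mathbf 1$, $\Delta(Y(h,x)h')=Y(\Delta(h),x)\Delta(h')$. Write $\Delta(h)=\sum h^{(1)}\otimes h^{(2)}$. A nonlocal vertex $H$-module-algebra is a nonlocal vertex algebra $V$ with an $H$-module structure (vertex operators denoted $Y(h,x)$) such that for $h\in H$, $u,v\in V$: $Y(h,x)v\in V\otimes\mathbb C((x))$ (a finite sum $\sum_i v_i f_i(x)$), $Y(h,x)\mathbf 1=\varepsilon(h)\mathbf 1$, and $Y(h,x)Y(u,z)v=\sum Y(Y(h^{(1)},x-z)u,z)Y(h^{(2)},x)v$. *)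

theory Defs
  imports Complex_Main "HOL-Library.Groups_Big_Fun"
begin

text \<open>A vector space over the complex numbers is a type 'a :: ab_group_add together with a scalar
  multiplication s :: complex => 'a => 'a satisfying Vector_Spaces.vector_space s.
  A vertex operator Y(a,x) = sum_n a_n x^(-n-1) is encoded by its modes: Y a n b = a_n b.
  A two-variable series is encoded by its coefficient function F p q (coefficient of
  x0^p x2^q, or x^p z^q).
  Elements of tensor products H (x) H (resp. H (x) H (x) H) are represented by finite lists of
  pairs (resp. triples); two such tensors are equal iff they agree under all pairings
  with products of linear functionals H -> C.\<close>

definition lin_fun :: "(complex \<Rightarrow> 'a::ab_group_add \<Rightarrow> 'a) \<Rightarrow> ('a \<Rightarrow> complex) \<Rightarrow> bool" where
  "lin_fun s f \<longleftrightarrow> Vector_Spaces.linear s ((*) :: complex \<Rightarrow> complex \<Rightarrow> complex) f"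

definition pair2 :: "('a \<Rightarrow> complex) \<Rightarrow> ('a \<Rightarrow> complex) \<Rightarrow> ('a \<times> 'a) list \<Rightarrow> complex" where
  "pair2 f g xs = (\<Sum>(a, b)\<leftarrow>xs. f a * g b)"

definition truncated :: "('a \<Rightarrow> int \<Rightarrow> 'w::zero \<Rightarrow> 'w) \<Rightarrow> bool" where
  "truncated Y \<longleftrightarrow> (\<forall>a w. \<exists>N. \<forall>n\<ge>N. Y a n w = 0)"

definition bilinear_modes ::
  "(complex \<Rightarrow> 'a::ab_group_add \<Rightarrow> 'a) \<Rightarrow> (complex \<Rightarrow> 'w::ab_group_add \<Rightarrow> 'w)
     \<Rightarrow> ('a \<Rightarrow> int \<Rightarrow> 'w \<Rightarrow> 'w) \<Rightarrow> bool" where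
  "bilinear_modes sA sW Y \<longleftrightarrow>
     (\<forall>n w. Vector_Spaces.linear sA sW (\<lambda>a. Y a n w)) \<and>
     (\<forall>n a. Vector_Spaces.linear sW sW (\<lambda>w. Y a n w))"

text \<open>Coefficient of x0^p x2^q in Y_W(u,x0+x2) Y_W(v,x2) w, where
  (x0+x2)^(-n-1) is expanded in nonnegative powers of x2: the term with x2^i of
  (x0+x2)^(-n-1) contributes to x0^p exactly when n = -p-1-i, with binomial (p+i choose i).\<close>
definition prod_coeff ::
  "(complex \<Rightarrow> 'w::ab_group_add \<Rightarrow> 'w) \<Rightarrow> ('a \<Rightarrow> int \<Rightarrow> 'w \<Rightarrow> 'w) \<Rightarrow> 'a \<Rightarrow> 'a \<Rightarrow> 'w
     \<Rightarrow> int \<Rightarrow> int \<Rightarrow> 'w" where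
  "prod_coeff s YW u v w p q =
     Sum_any (\<lambda>i::nat. s ((of_int (- (- p - 1 - int i) - 1) :: complex) gchoose i)
                         (YW u (- p - 1 - int i) (YW v (int i - q - 1) w)))"

text \<open>Coefficient of x0^p x2^q in Y_W(Y(u,x0)v, x2) w.\<close>
definition iter_coeff ::
  "('a \<Rightarrow> int \<Rightarrow> 'a \<Rightarrow> 'a) \<Rightarrow> ('a \<Rightarrow> int \<Rightarrow> 'w \<Rightarrow> 'w) \<Rightarrow> 'a \<Rightarrow> 'a \<Rightarrow> 'w
     \<Rightarrow> int \<Rightarrow> int \<Rightarrow> 'w" where
  "iter_coeff Y YW u v w p q = YW (Y u (- p - 1) v) (- q - 1) w"

text \<open>Multiplication of a two-variable series (coefficients F p q of x0^p x2^q) by the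
  polynomial (x0+x2)^k.\<close>
definition polymul ::
  "(complex \<Rightarrow> 'w::ab_group_add \<Rightarrow> 'w) \<Rightarrow> nat \<Rightarrow> (int \<Rightarrow> int \<Rightarrow> 'w) \<Rightarrow> int \<Rightarrow> int \<Rightarrow> 'w" where
  "polymul s k F p q = (\<Sum>j\<in>{0..k}. s (of_nat (k choose j)) (F (p - int (k - j)) (q - int j)))"

definition weak_assoc ::
  "(complex \<Rightarrow> 'w::ab_group_add \<Rightarrow> 'w) \<Rightarrow> ('a \<Rightarrow> int \<Rightarrow> 'a \<Rightarrow> 'a)
     \<Rightarrow> ('a \<Rightarrow> int \<Rightarrow> 'w \<Rightarrow> 'w) \<Rightarrow> bool" where
  "weak_assoc s Y YW \<longleftrightarrow>
     (\<forall>u v w. \<exists>k::nat. \<forall>p q.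
        polymul s k (prod_coeff s YW u v w) p q = polymul s k (iter_coeff Y YW u v w) p q)"

definition nonlocal_va ::
  "(complex \<Rightarrow> 'a::ab_group_add \<Rightarrow> 'a) \<Rightarrow> ('a \<Rightarrow> int \<Rightarrow> 'a \<Rightarrow> 'a) \<Rightarrow> 'a \<Rightarrow> bool" where
  "nonlocal_va s Y one \<longleftrightarrow>
     Vector_Spaces.vector_space s \<and>
     bilinear_modes s s Y \<and>
     truncated Y \<and>
     (\<forall>v n. Y one n v = (if n = -1 then v else 0)) \<and>
     (\<forall>v n. n \<ge> 0 \<longrightarrow> Y v n one = 0) \<and>
     (\<forall>v. Y v (-1) one = v) \<and>
     weak_assoc s Y Y"

definition nonlocal_va_module ::
  "(complex \<Rightarrow> 'a::ab_group_add \<Rightarrow> 'a) \<Rightarrow> ('a \<Rightarrow> int \<Rightarrow> 'a \<Rightarrow> 'a) \<Rightarrow> 'a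
     \<Rightarrow> (complex \<Rightarrow> 'w::ab_group_add \<Rightarrow> 'w) \<Rightarrow> ('a \<Rightarrow> int \<Rightarrow> 'w \<Rightarrow> 'w) \<Rightarrow> bool" where
  "nonlocal_va_module sA Y one sW YW \<longleftrightarrow>
     Vector_Spaces.vector_space sW \<and>
     bilinear_modes sA sW YW \<and>
     truncated YW \<and>
     (\<forall>w n. YW one n w = (if n = -1 then w else 0)) \<and>
     weak_assoc sW Y YW"

definition coalgebra ::
  "(complex \<Rightarrow> 'h::ab_group_add \<Rightarrow> 'h) \<Rightarrow> ('h \<Rightarrow> ('h \<times> 'h) list) \<Rightarrow> ('h \<Rightarrow> complex) \<Rightarrow> bool" where
  "coalgebra s Delta eps \<longleftrightarrow>
     lin_fun s eps \<and>
     (\<forall>f g. lin_fun s f \<longrightarrow> lin_fun s g \<longrightarrow> lin_fun s (\<lambda>h. pair2 f g (Delta h))) \<and>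
     (\<forall>f g k h. lin_fun s f \<longrightarrow> lin_fun s g \<longrightarrow> lin_fun s k \<longrightarrow>
        (\<Sum>(a, b)\<leftarrow>Delta h. pair2 f g (Delta a) * k b) =
        (\<Sum>(a, b)\<leftarrow>Delta h. f a * pair2 g k (Delta b))) \<and>
     (\<forall>h. (\<Sum>(a, b)\<leftarrow>Delta h. s (eps a) b) = h) \<and>
     (\<forall>h. (\<Sum>(a, b)\<leftarrow>Delta h. s (eps b) a) = h)"

definition nonlocal_vertex_bialgebra ::
  "(complex \<Rightarrow> 'h::ab_group_add \<Rightarrow> 'h) \<Rightarrow> ('h \<Rightarrow> int \<Rightarrow> 'h \<Rightarrow> 'h) \<Rightarrow> 'h
     \<Rightarrow> ('h \<Rightarrow> ('h \<times> 'h) list) \<Rightarrow> ('h \<Rightarrow> complex) \<Rightarrow> bool" where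
  "nonlocal_vertex_bialgebra s Y one Delta eps \<longleftrightarrow>
     nonlocal_va s Y one \<and>
     coalgebra s Delta eps \<and>
     eps one = 1 \<and>
     (\<forall>h h' n. eps (Y h n h') = (if n = -1 then eps h * eps h' else 0)) \<and>
     (\<forall>f g. lin_fun s f \<longrightarrow> lin_fun s g \<longrightarrow> pair2 f g (Delta one) = f one * g one) \<and>
     (\<forall>f g h h' n. lin_fun s f \<longrightarrow> lin_fun s g \<longrightarrow>
        pair2 f g (Delta (Y h n h')) =
        (\<Sum>(a, b)\<leftarrow>Delta h. \<Sum>(a', b')\<leftarrow>Delta h'.
            Sum_any (\<lambda>p::int. f (Y a p a') * g (Y b (n - 1 - p) b'))))"

text \<open>Coefficient of x^p z^q in Y(Y(h1,x-z)u, z) Y(h2,x) v (for a single pair h1, h2), with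
  (x-z)^(-n-1) expanded in nonnegative powers of z: the z^i term
  (-1)^i (-n-1 choose i) x^(-n-1-i) z^i; then the mode of Y(.,z) is i-q-1 and the mode of
  Y(h2,x) is -n-i-p-2.\<close>
definition ma_rhs_coeff ::
  "(complex \<Rightarrow> 'v::ab_group_add \<Rightarrow> 'v) \<Rightarrow> ('v \<Rightarrow> int \<Rightarrow> 'v \<Rightarrow> 'v) \<Rightarrow> ('h \<Rightarrow> int \<Rightarrow> 'v \<Rightarrow> 'v)
     \<Rightarrow> 'h \<Rightarrow> 'h \<Rightarrow> 'v \<Rightarrow> 'v \<Rightarrow> int \<Rightarrow> int \<Rightarrow> 'v" where
  "ma_rhs_coeff sV YV YH h1 h2 u v p q =
     Sum_any (\<lambda>(i::nat, n::int).
        sV ((-1) ^ i * ((of_int (- n - 1) :: complex) gchoose i))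
           (YV (YH h1 n u) (int i - q - 1) (YH h2 (- n - int i - p - 2) v)))"

definition module_algebra ::
  "(complex \<Rightarrow> 'h::ab_group_add \<Rightarrow> 'h) \<Rightarrow> ('h \<Rightarrow> int \<Rightarrow> 'h \<Rightarrow> 'h) \<Rightarrow> 'h
     \<Rightarrow> ('h \<Rightarrow> ('h \<times> 'h) list) \<Rightarrow> ('h \<Rightarrow> complex)
     \<Rightarrow> (complex \<Rightarrow> 'v::ab_group_add \<Rightarrow> 'v) \<Rightarrow> ('v \<Rightarrow> int \<Rightarrow> 'v \<Rightarrow> 'v) \<Rightarrow> 'v
     \<Rightarrow> ('h \<Rightarrow> int \<Rightarrow> 'v \<Rightarrow> 'v) \<Rightarrow> bool" where
  "module_algebra sH YH1 oneH Delta eps sV YV oneV YH \<longleftrightarrow>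
     nonlocal_va sV YV oneV \<and>
     nonlocal_va_module sH YH1 oneH sV YH \<and>
     (\<forall>h v. \<exists>ps :: ('v \<times> (int \<Rightarrow> complex)) list.
        (\<forall>(w, f)\<in>set ps. \<exists>N. \<forall>k<N. f k = 0) \<and>
        (\<forall>n. YH h n v = (\<Sum>(w, f)\<leftarrow>ps. sV (f (- n - 1)) w))) \<and>
     (\<forall>h n. YH h n oneV = (if n = -1 then sV (eps h) oneV else 0)) \<and>
     (\<forall>h u v p q. YH h (- p - 1) (YV u (- q - 1) v) =
        (\<Sum>(h1, h2)\<leftarrow>Delta h. ma_rhs_coeff sV YV YH h1 h2 u v p q))"

text \<open>Coefficient of x^p z^q in Y(h,z+x) Y(h',z) v, with (z+x)^(-n-1) expanded in
  nonnegative powers of x (zero for p < 0).\<close>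
definition shifted_prod_term ::
  "(complex \<Rightarrow> 'v::ab_group_add \<Rightarrow> 'v) \<Rightarrow> ('h \<Rightarrow> int \<Rightarrow> 'v \<Rightarrow> 'v) \<Rightarrow> 'h \<Rightarrow> 'h \<Rightarrow> 'v
     \<Rightarrow> int \<Rightarrow> int \<Rightarrow> int \<Rightarrow> 'v" where
  "shifted_prod_term sV YH h h' v p q n =
     (if p < 0 then 0
      else sV ((of_int (- n - 1) :: complex) gchoose (nat p)) (YH h n (YH h' (- n - p - q - 2) v)))"

definition shifted_prod_coeff ::
  "(complex \<Rightarrow> 'v::ab_group_add \<Rightarrow> 'v) \<Rightarrow> ('h \<Rightarrow> int \<Rightarrow> 'v \<Rightarrow> 'v) \<Rightarrow> 'h \<Rightarrow> 'h \<Rightarrow> 'v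
     \<Rightarrow> int \<Rightarrow> int \<Rightarrow> 'v" where
  "shifted_prod_coeff sV YH h h' v p q = Sum_any (shifted_prod_term sV YH h h' v p q)"

end

theory Submission imports Defs "HOL-Computational_Algebra.Formal_Power_Series" begin

lemma polymul_Suc:
  assumes V: "vector_space s"
  shows "polymul s (Suc k) F p q = polymul s k F (p-1) q + polymul s k F p (q-1)"
proof -
  interpret V: vector_space s by fact
  have split: "polymul s (Suc k) F p q =
     (\<Sum>j\<le>Suc k. s (of_nat (k choose j)) (F (p - int (Suc k - j)) (q - int j))) +
     (\<Sum>j\<le>Suc k. s (if j = 0 then 0 else of_nat (k choose (j - 1))) (F (p - int (Suc k - j)) (q - int j)))"
    unfolding polymul_def atLeast0AtMost sum.distrib[symmetric]
  proof (rule sum.cong[OF refl])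
    fix j assume "j \<in> {..Suc k}"
    show "s (of_nat (Suc k choose j)) (F (p - int (Suc k - j)) (q - int j)) =
      s (of_nat (k choose j)) (F (p - int (Suc k - j)) (q - int j)) +
      s (if j = 0 then 0 else of_nat (k choose (j - 1))) (F (p - int (Suc k - j)) (q - int j))"
      by (cases j) (auto simp: V.scale_left_distrib[symmetric] add.commute)
  qed
  have A: "(\<Sum>j\<le>Suc k. s (of_nat (k choose j)) (F (p - int (Suc k - j)) (q - int j))) = polymul s k F (p-1) q"
    unfolding polymul_def atLeast0AtMost sum.atMost_Suc
    by (auto intro!: sum.cong simp: of_nat_diff binomial_eq_0 algebra_simps)
  have B: "(\<Sum>j\<le>Suc k. s (if j = 0 then 0 else of_nat (k choose (j - 1))) (F (p - int (Suc k - j)) (q - int j))) = polymul s k F p (q-1)"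
    unfolding polymul_def atLeast0AtMost sum.atMost_Suc_shift
    by (auto intro!: sum.cong simp: algebra_simps)
  show ?thesis using split A B by simp
qed

lemma polymul_mono:
  assumes V: "vector_space s" and "\<forall>p q. polymul s k F p q = polymul s k G p q"
  shows "\<forall>p q. polymul s (k + d) F p q = polymul s (k + d) G p q"
  by (induction d) (use assms in \<open>auto simp: polymul_Suc[OF V]\<close>)

lemma polymul_inj:
  assumes V: "vector_space s" and E: "\<forall>p q. polymul s k F p q = polymul s k G p q"
    and Z: "\<forall>p q. p < p0 \<longrightarrow> F p q = G p q"
  shows "F p q = G p q"
proof -
  interpret V: vector_space s by fact
  have "\<forall>p q. p < p0 + int d \<longrightarrow> F p q = G p q" for d
  proof (induction d)
    case 0 then show ?case using Z by simp
  next
    case (Suc d)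
    show ?case
    proof (intro allI impI)
      fix p q assume pl: "p < p0 + int (Suc d)"
      show "F p q = G p q"
      proof (cases "p < p0 + int d")
        case True then show ?thesis using Suc by blast
      next
        case False
        have eqs: "(\<Sum>j<k. s (of_nat (k choose j)) (F (p - int (k - j)) (q + int k - int j))) =
                   (\<Sum>j<k. s (of_nat (k choose j)) (G (p - int (k - j)) (q + int k - int j)))"
          using Suc pl False by (intro sum.cong refl) (auto)
        have "polymul s k F p (q + int k) = polymul s k G p (q + int k)" using E by blast
        then have "(\<Sum>j<k. s (of_nat (k choose j)) (F (p - int (k - j)) (q + int k - int j))) + F p q =
                   (\<Sum>j<k. s (of_nat (k choose j)) (G (p - int (k - j)) (q + int k - int j))) + G p q"
          unfolding polymul_def atLeast0AtMost lessThan_Suc_atMost[symmetric] sum.lessThan_Suc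
          by simp
        then show ?thesis using eqs by simp
      qed
    qed
  qed
  from this[rule_format, of p "nat (p - p0 + 1)"] show ?thesis by simp
qed
lemma vand1:
  fixes a :: complex and K :: nat and t :: int
  shows "(\<Sum>i\<in>{0..K}. of_nat (K choose i) * (if int i \<le> t then a gchoose nat (t - int i) else 0))
       = (if t \<ge> 0 then (of_nat K + a) gchoose nat t else 0)"
proof (cases "t \<ge> 0")
  case False then show ?thesis by (auto intro!: sum.neutral)
next
  case True
  define T where "T = nat t"
  have tT: "t = int T" using True T_def by simp
  have "(\<Sum>i\<in>{0..K}. of_nat (K choose i) * (if int i \<le> t then a gchoose nat (t - int i) else 0))
      = (\<Sum>i\<in>{0..K+T}. of_nat (K choose i) * (if i \<le> T then a gchoose (T - i) else 0))"
    by (rule sum.mono_neutral_cong_left) (auto simp: tT binomial_eq_0 nat_diff_distrib)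
  also have "\<dots> = (\<Sum>i\<in>{0..T}. (of_nat K gchoose i) * (a gchoose (T - i)))"
    by (rule sum.mono_neutral_cong_right) (auto simp: binomial_gbinomial)
  also have "\<dots> = (of_nat K + a) gchoose T" by (rule gbinomial_Vandermonde)
  finally show ?thesis using True T_def by simp
qed

lemma scalar_eq:
  fixes K :: nat and n p :: int
  assumes "n + 1 \<le> int K"
  shows "(\<Sum>j\<in>{0..K}. of_nat (K choose j) *
            (if p - int (K - j) < 0 then 0 else (of_int (- n - 1) :: complex) gchoose nat (p - int (K - j))))
       = (\<Sum>j\<in>{0..K}. of_nat (K choose j) *
            (if n \<le> - (p - int (K - j)) - 1 then (of_int (- n - 1) :: complex) gchoose nat (- n - 1 - (p - int (K - j))) else 0))"
proof -
  define a :: complex where "a = of_int (- n - 1)"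
  define K' where "K' = nat (int K - n - 1)"
  have aK: "of_nat K + a = of_nat K'" using assms by (simp add: a_def K'_def of_nat_diff)
  have L: "(\<Sum>j\<in>{0..K}. of_nat (K choose j) *
            (if p - int (K - j) < 0 then 0 else a gchoose nat (p - int (K - j))))
         = (\<Sum>i\<in>{0..K}. of_nat (K choose i) * (if int i \<le> p then a gchoose nat (p - int i) else 0))"
  proof -
    have "(\<Sum>j\<in>{0..K}. of_nat (K choose j) *
            (if p - int (K - j) < 0 then 0 else a gchoose nat (p - int (K - j))))
         = (\<Sum>j\<in>{0..K}. of_nat (K choose (K - j)) * (if int (K - j) \<le> p then a gchoose nat (p - int (K - j)) else 0))"
      by (intro sum.cong refl) (auto simp: binomial_symmetric[symmetric])
    also have "\<dots> = (\<Sum>i\<in>{0..K}. of_nat (K choose i) * (if int i \<le> p then a gchoose nat (p - int i) else 0))"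
      by (rule sum.reindex_bij_witness[of _ "\<lambda>i. K - i" "\<lambda>i. K - i"]) auto
    finally show ?thesis .
  qed
  have R: "(\<Sum>j\<in>{0..K}. of_nat (K choose j) *
            (if n \<le> - (p - int (K - j)) - 1 then a gchoose nat (- n - 1 - (p - int (K - j))) else 0))
         = (\<Sum>i\<in>{0..K}. of_nat (K choose i) * (if int i \<le> int K - p - 1 - n then a gchoose nat ((int K - p - 1 - n) - int i) else 0))"
    by (intro sum.cong refl) (auto simp: of_nat_diff algebra_simps)
  have fin: "(if p \<ge> 0 then of_nat K' gchoose nat p else 0) =
       (if int K - p - 1 - n \<ge> 0 then (of_nat K' :: complex) gchoose nat (int K - p - 1 - n) else 0)"
  proof -
    have KK: "int K' = int K - n - 1" using assms K'_def by simp
    show ?thesis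
    proof (cases "p \<ge> 0 \<and> p \<le> int K'")
      case True
      have np: "nat p \<le> K'" using True by (simp add: nat_le_iff)
      have i1: "int (K' - nat p) = int K - p - 1 - n" using KK True np by (simp add: of_nat_diff)
      have "nat (int K - p - 1 - n) = K' - nat p" unfolding i1[symmetric] by simp
      moreover have "(of_nat K' :: complex) gchoose nat p = of_nat K' gchoose (K' - nat p)"
        by (rule gbinomial_of_nat_symmetric[OF np])
      ultimately show ?thesis using True KK by simp
    next
      case False
      show ?thesis
      proof (cases "p < 0")
        case True
        have "K' < nat (int K - p - 1 - n)" using True KK by linarith
        then have "(of_nat K' :: complex) gchoose nat (int K - p - 1 - n) = 0"
          by (simp add: binomial_gbinomial[symmetric] binomial_eq_0)
        then show ?thesis using True by simp
      next
        case False2: False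
        with False have "int K' < p" by linarith
        then have "K' < nat p" by linarith
        then have "(of_nat K' :: complex) gchoose nat p = 0"
          by (simp add: binomial_gbinomial[symmetric] binomial_eq_0)
        moreover have "\<not> int K - p - 1 - n \<ge> 0" using \<open>int K' < p\<close> KK by linarith
        ultimately show ?thesis by simp
      qed
    qed
  qed
  show ?thesis
    unfolding a_def[symmetric] L R vand1 aK using fin by simp
qed
lemma polymul_sum:
  assumes V: "vector_space s" and A: "finite A"
  shows "polymul s K (\<lambda>p' q'. \<Sum>n\<in>A. s (\<beta> n p') (c n (- n - p' - q' - 2))) p q
       = (\<Sum>n\<in>A. s (\<Sum>j\<in>{0..K}. of_nat (K choose j) * \<beta> n (p - int (K - j))) (c n (int K - n - p - q - 2)))"
proof -
  interpret V: vector_space s by fact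
  have "polymul s K (\<lambda>p' q'. \<Sum>n\<in>A. s (\<beta> n p') (c n (- n - p' - q' - 2))) p q
      = (\<Sum>j\<in>{0..K}. \<Sum>n\<in>A. s (of_nat (K choose j) * \<beta> n (p - int (K - j))) (c n (int K - n - p - q - 2)))"
    unfolding polymul_def
  proof (intro sum.cong refl)
    fix j assume j: "j \<in> {0..K}"
    have e: "\<And>n. - n - (p - int (K - j)) - (q - int j) - 2 = int K - n - p - q - 2"
      using j by (simp add: of_nat_diff)
    show "s (of_nat (K choose j)) (\<Sum>n\<in>A. s (\<beta> n (p - int (K - j))) (c n (- n - (p - int (K - j)) - (q - int j) - 2)))
        = (\<Sum>n\<in>A. s (of_nat (K choose j) * \<beta> n (p - int (K - j))) (c n (int K - n - p - q - 2)))"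
      unfolding e V.scale_sum_right V.scale_scale ..
  qed
  also have "\<dots> = (\<Sum>n\<in>A. \<Sum>j\<in>{0..K}. s (of_nat (K choose j) * \<beta> n (p - int (K - j))) (c n (int K - n - p - q - 2)))"
    by (rule sum.swap)
  also have "\<dots> = (\<Sum>n\<in>A. s (\<Sum>j\<in>{0..K}. of_nat (K choose j) * \<beta> n (p - int (K - j))) (c n (int K - n - p - q - 2)))"
    unfolding V.scale_sum_left ..
  finally show ?thesis .
qed

lemma list_bound_ge:
  "\<forall>x\<in>set xs. \<exists>N::int. \<forall>n\<ge>N. P x n \<Longrightarrow> \<exists>N. \<forall>x\<in>set xs. \<forall>n\<ge>N. P x n"
proof (induction xs)
  case Nil then show ?case by simp
next
  case (Cons a xs)
  then obtain N1 where N1: "\<forall>n\<ge>N1. P a n" by auto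
  from Cons obtain N2 where N2: "\<forall>x\<in>set xs. \<forall>n\<ge>N2. P x n" by auto
  show ?case by (rule exI[of _ "max N1 N2"]) (use N1 N2 in auto)
qed

lemma list_bound_lt:
  "\<forall>x\<in>set xs. \<exists>N::int. \<forall>n<N. P x n \<Longrightarrow> \<exists>N. \<forall>x\<in>set xs. \<forall>n<N. P x n"
proof (induction xs)
  case Nil then show ?case by simp
next
  case (Cons a xs)
  then obtain N1 where N1: "\<forall>n<N1. P a n" by auto
  from Cons obtain N2 where N2: "\<forall>x\<in>set xs. \<forall>n<N2. P x n" by auto
  show ?case by (rule exI[of _ "min N1 N2"]) (use N1 N2 in auto)
qed

lemma lin_sum_list:
  assumes "module_hom s s g"
  shows "g (\<Sum>(w, f)\<leftarrow>ps. s (f k) w) = (\<Sum>(w, f)\<leftarrow>ps. s (f k) (g w))"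
  by (induction ps) (auto simp: module_hom.add[OF assms] module_hom.scale[OF assms] module_hom.zero[OF assms])

lemma sum_list_zero_map:
  "(\<forall>x\<in>set xs. g x = 0) \<Longrightarrow> sum_list (map g xs) = (0::'a::monoid_add)"
  by (induction xs) auto


theorem lemma4p1:
  fixes sH :: "complex \<Rightarrow> 'h::ab_group_add \<Rightarrow> 'h"
    and YH1 :: "'h \<Rightarrow> int \<Rightarrow> 'h \<Rightarrow> 'h" and oneH :: 'h
    and Delta :: "'h \<Rightarrow> ('h \<times> 'h) list" and eps :: "'h \<Rightarrow> complex"
    and sV :: "complex \<Rightarrow> 'v::ab_group_add \<Rightarrow> 'v"
    and YV :: "'v \<Rightarrow> int \<Rightarrow> 'v \<Rightarrow> 'v" and oneV :: 'v
    and YH :: "'h \<Rightarrow> int \<Rightarrow> 'v \<Rightarrow> 'v"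
  assumes "nonlocal_vertex_bialgebra sH YH1 oneH Delta eps"
    and "module_algebra sH YH1 oneH Delta eps sV YV oneV YH"
  shows "\<forall>h h' v p q.
           finite {n. shifted_prod_term sV YH h h' v p q n \<noteq> 0} \<and>
           shifted_prod_coeff sV YH h h' v p q = YH (YH1 h (- p - 1) h') (- q - 1) v"
proof -
  have VS: "vector_space sV" and bil: "bilinear_modes sH sV YH" and trunc: "truncated YH"
    and wa: "weak_assoc sV YH1 YH"
    and fr: "\<forall>h v. \<exists>ps :: ('v \<times> (int \<Rightarrow> complex)) list.
        (\<forall>(w, f)\<in>set ps. \<exists>N. \<forall>k<N. f k = 0) \<and>
        (\<forall>n. YH h n v = (\<Sum>(w, f)\<leftarrow>ps. sV (f (- n - 1)) w))"
    using assms(2) unfolding module_algebra_def nonlocal_va_module_def nonlocal_va_def by blast+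
  have truncH: "truncated YH1"
    using assms(1) unfolding nonlocal_vertex_bialgebra_def nonlocal_va_def by blast
  interpret V: vector_space sV by (rule VS)
  have linW: "\<And>a n. module_hom sV sV (\<lambda>w. YH a n w)"
    using bil unfolding bilinear_modes_def module_hom_iff_linear by blast
  have linA: "\<And>w n. module_hom sH sV (\<lambda>a. YH a n w)"
    using bil unfolding bilinear_modes_def module_hom_iff_linear by blast
  show ?thesis
  proof (intro allI)
    fix h h' v p q
    define c where "c n m = YH h n (YH h' m v)" for n m
    obtain ps :: "('v \<times> (int \<Rightarrow> complex)) list" where
      ps1: "\<forall>(w, f)\<in>set ps. \<exists>N. \<forall>k<N. f k = 0" and
      ps2: "\<forall>n. YH h' n v = (\<Sum>(w, f)\<leftarrow>ps. sV (f (- n - 1)) w)"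
      using fr by blast
    have "\<forall>x\<in>set ps. \<exists>N::int. \<forall>k<N. snd x k = 0" using ps1 by auto
    from list_bound_lt[OF this] obtain N0 where N0: "\<forall>x\<in>set ps. \<forall>k<N0. snd x k = 0" by blast
    have "\<forall>x\<in>set ps. \<exists>N::int. \<forall>n\<ge>N. YH h n (fst x) = 0" using trunc unfolding truncated_def by blast
    from list_bound_ge[OF this] obtain M1 where M1: "\<forall>x\<in>set ps. \<forall>n\<ge>M1. YH h n (fst x) = 0" by blast
    define M2 where "M2 = - N0 - 1"
    have cz1: "c n m = 0" if "n \<ge> M1" for n m
    proof -
      have "c n m = (\<Sum>(w, f)\<leftarrow>ps. sV (f (- m - 1)) (YH h n w))"
        unfolding c_def ps2[rule_format] by (rule lin_sum_list[OF linW])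
      also have "\<dots> = 0"
        by (rule sum_list_zero_map) (use M1 that in auto)
      finally show ?thesis .
    qed
    have cz2: "c n m = 0" if "m > M2" for n m
    proof -
      have "YH h' m v = 0"
        unfolding ps2[rule_format] by (rule sum_list_zero_map) (use N0 that M2_def in auto)
      then show ?thesis unfolding c_def using module_hom.zero[OF linW] by simp
    qed
    have S_eq: "shifted_prod_coeff sV YH h h' v p' q' =
        (\<Sum>n\<in>A. sV (if p' < 0 then 0 else (of_int (- n - 1) :: complex) gchoose nat p') (c n (- n - p' - q' - 2)))"
      if A: "finite A" and Z: "\<forall>n. n \<notin> A \<longrightarrow> c n (- n - p' - q' - 2) = 0" for p' q' A
      unfolding shifted_prod_coeff_def
    proof (subst Sum_any.expand_superset[OF A])
      show "{n. shifted_prod_term sV YH h h' v p' q' n \<noteq> 0} \<subseteq> A"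
        using Z unfolding shifted_prod_term_def c_def by auto
      show "sum (shifted_prod_term sV YH h h' v p' q') A =
        (\<Sum>n\<in>A. sV (if p' < 0 then 0 else (of_int (- n - 1) :: complex) gchoose nat p') (c n (- n - p' - q' - 2)))"
        unfolding shifted_prod_term_def c_def by (intro sum.cong refl) auto
    qed
    have P_eq: "prod_coeff sV YH h h' v p' q' =
        (\<Sum>n\<in>A. sV (if n \<le> - p' - 1 then (of_int (- n - 1) :: complex) gchoose nat (- n - 1 - p') else 0) (c n (- n - p' - q' - 2)))"
      if A: "finite A" and Z: "\<forall>n. n \<notin> A \<longrightarrow> c n (- n - p' - q' - 2) = 0" for p' q' A
    proof -
      define \<phi> where "\<phi> i = - p' - 1 - int i" for i :: nat
      define g where "g i = sV ((of_int (- (- p' - 1 - int i) - 1) :: complex) gchoose i)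
                         (YH h (- p' - 1 - int i) (YH h' (int i - q' - 1) v))" for i
      define I where "I = {i. \<phi> i \<in> A}"
      have injphi: "inj \<phi>" unfolding \<phi>_def inj_def by auto
      have finI: "finite I" unfolding I_def using finite_vimageI[OF A injphi] by (simp add: vimage_def)
      have cphi: "c (\<phi> i) (- \<phi> i - p' - q' - 2) = YH h (- p' - 1 - int i) (YH h' (int i - q' - 1) v)" for i
        unfolding c_def \<phi>_def by (simp add: algebra_simps)
      have "prod_coeff sV YH h h' v p' q' = Sum_any g" unfolding prod_coeff_def g_def ..
      also have "\<dots> = sum g I"
      proof (rule Sum_any.expand_superset[OF finI])
        show "{a. g a \<noteq> 0} \<subseteq> I"
        proof
          fix i assume "i \<in> {a. g a \<noteq> 0}"
          then have "c (\<phi> i) (- \<phi> i - p' - q' - 2) \<noteq> 0" unfolding g_def cphi by auto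
          then show "i \<in> I" using Z unfolding I_def by blast
        qed
      qed
      also have "\<dots> = (\<Sum>n\<in>\<phi> ` I. sV (if n \<le> - p' - 1 then (of_int (- n - 1) :: complex) gchoose nat (- n - 1 - p') else 0) (c n (- n - p' - q' - 2)))"
        by (subst sum.reindex) (use injphi in \<open>auto simp: inj_on_def g_def cphi[symmetric] intro!: sum.cong\<close>, auto simp: \<phi>_def algebra_simps)
      also have "\<dots> = (\<Sum>n\<in>A. sV (if n \<le> - p' - 1 then (of_int (- n - 1) :: complex) gchoose nat (- n - 1 - p') else 0) (c n (- n - p' - q' - 2)))"
      proof (rule sum.mono_neutral_left[OF A])
        show "\<phi> ` I \<subseteq> A" unfolding I_def by auto
        show "\<forall>n\<in>A - \<phi> ` I. sV (if n \<le> - p' - 1 then (of_int (- n - 1) :: complex) gchoose nat (- n - 1 - p') else 0) (c n (- n - p' - q' - 2)) = 0"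
        proof
          fix n assume n: "n \<in> A - \<phi> ` I"
          have "\<not> n \<le> - p' - 1"
          proof
            assume "n \<le> - p' - 1"
            then have "n = \<phi> (nat (- p' - 1 - n))" unfolding \<phi>_def by simp
            then show False using n unfolding I_def by (metis (mono_tags, lifting) DiffE image_iff mem_Collect_eq)
          qed
          then show "sV (if n \<le> - p' - 1 then (of_int (- n - 1) :: complex) gchoose nat (- n - 1 - p') else 0) (c n (- n - p' - q' - 2)) = 0"
            by simp
        qed
      qed
      finally show ?thesis .
    qed
    obtain k0 where k0: "\<forall>p q. polymul sV k0 (prod_coeff sV YH h h' v) p q = polymul sV k0 (iter_coeff YH1 YH h h' v) p q"
      using wa unfolding weak_assoc_def by blast
    obtain NH where NH: "\<forall>n\<ge>NH. YH1 h n h' = 0" using truncH unfolding truncated_def by blast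
    define K where "K = k0 + nat M1"
    have KM: "M1 \<le> int K" unfolding K_def by simp
    have PI: "\<forall>p q. polymul sV K (prod_coeff sV YH h h' v) p q = polymul sV K (iter_coeff YH1 YH h h' v) p q"
      unfolding K_def by (rule polymul_mono[OF VS k0])
    define Sf where "Sf = (\<lambda>p q. shifted_prod_coeff sV YH h h' v p q)"
    define \<beta> where "\<beta> n p' = (if p' < 0 then 0 else (of_int (- n - 1) :: complex) gchoose nat p')" for n p' :: int
    define \<gamma> where "\<gamma> n p' = (if n \<le> - p' - 1 then (of_int (- n - 1) :: complex) gchoose nat (- n - 1 - p') else 0)" for n p' :: int
    have SP: "polymul sV K Sf p0 q0 = polymul sV K (prod_coeff sV YH h h' v) p0 q0" for p0 q0
    proof -
      define A where "A = {int K - p0 - q0 - 2 - M2 ..< M1}"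
      have finA: "finite A" unfolding A_def by simp
      have Z: "\<forall>n. n \<notin> A \<longrightarrow> c n (- n - (p0 - int (K - j)) - (q0 - int j) - 2) = 0" if j: "j \<in> {0..K}" for j
      proof (intro allI impI)
        fix n assume n: "n \<notin> A"
        have e: "- n - (p0 - int (K - j)) - (q0 - int j) - 2 = int K - n - p0 - q0 - 2"
          using j by (simp add: of_nat_diff)
        show "c n (- n - (p0 - int (K - j)) - (q0 - int j) - 2) = 0"
          unfolding e using n cz1 cz2 unfolding A_def by (cases "n \<ge> M1") auto
      qed
      have "polymul sV K Sf p0 q0 = polymul sV K (\<lambda>p' q'. \<Sum>n\<in>A. sV (\<beta> n p') (c n (- n - p' - q' - 2))) p0 q0"
        unfolding polymul_def Sf_def \<beta>_def by (intro sum.cong refl, subst S_eq[OF finA Z]) auto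
      also have "\<dots> = (\<Sum>n\<in>A. sV (\<Sum>j\<in>{0..K}. of_nat (K choose j) * \<beta> n (p0 - int (K - j))) (c n (int K - n - p0 - q0 - 2)))"
        by (rule polymul_sum[OF VS finA])
      also have "\<dots> = (\<Sum>n\<in>A. sV (\<Sum>j\<in>{0..K}. of_nat (K choose j) * \<gamma> n (p0 - int (K - j))) (c n (int K - n - p0 - q0 - 2)))"
      proof (intro sum.cong refl)
        fix n assume "n \<in> A"
        then have "n + 1 \<le> int K" using KM unfolding A_def by auto
        from scalar_eq[OF this, of p0] show "sV (\<Sum>j\<in>{0..K}. of_nat (K choose j) * \<beta> n (p0 - int (K - j))) (c n (int K - n - p0 - q0 - 2)) =
          sV (\<Sum>j\<in>{0..K}. of_nat (K choose j) * \<gamma> n (p0 - int (K - j))) (c n (int K - n - p0 - q0 - 2))"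
          unfolding \<beta>_def \<gamma>_def by simp
      qed
      also have "\<dots> = polymul sV K (\<lambda>p' q'. \<Sum>n\<in>A. sV (\<gamma> n p') (c n (- n - p' - q' - 2))) p0 q0"
        by (rule polymul_sum[OF VS finA, symmetric])
      also have "\<dots> = polymul sV K (prod_coeff sV YH h h' v) p0 q0"
        unfolding polymul_def \<gamma>_def by (intro sum.cong refl, subst P_eq[OF finA Z]) auto
      finally show ?thesis .
    qed
    have SI: "Sf p q = iter_coeff YH1 YH h h' v p q"
    proof (rule polymul_inj[OF VS])
      show "\<forall>p q. polymul sV K Sf p q = polymul sV K (iter_coeff YH1 YH h h' v) p q"
        using SP PI by simp
      show "\<forall>p q. p < min 0 (- NH) \<longrightarrow> Sf p q = iter_coeff YH1 YH h h' v p q"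
      proof (intro allI impI)
        fix p q :: int assume pl: "p < min 0 (- NH)"
        have "Sf p q = 0" unfolding Sf_def shifted_prod_coeff_def shifted_prod_term_def using pl by simp
        moreover have "YH1 h (- p - 1) h' = 0" using NH pl by simp
        ultimately show "Sf p q = iter_coeff YH1 YH h h' v p q"
          unfolding iter_coeff_def using module_hom.zero[OF linA] by simp
      qed
    qed
    have fin: "finite {n. shifted_prod_term sV YH h h' v p q n \<noteq> 0}"
    proof (rule finite_subset)
      show "{n. shifted_prod_term sV YH h h' v p q n \<noteq> 0} \<subseteq> {- p - q - 2 - M2 ..< M1}"
      proof
        fix n assume "n \<in> {n. shifted_prod_term sV YH h h' v p q n \<noteq> 0}"
        then have "c n (- n - p - q - 2) \<noteq> 0" unfolding shifted_prod_term_def c_def by (auto split: if_splits)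
        then show "n \<in> {- p - q - 2 - M2 ..< M1}" using cz1 cz2 by (cases "n \<ge> M1"; cases "- n - p - q - 2 > M2") auto
      qed
    qed simp
    show "finite {n. shifted_prod_term sV YH h h' v p q n \<noteq> 0} \<and>
           shifted_prod_coeff sV YH h h' v p q = YH (YH1 h (- p - 1) h') (- q - 1) v"
      using fin SI unfolding Sf_def iter_coeff_def by simp
  qed
qed
end
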